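(* Let $n>1$ and $k\ge1$. Let $\mathcal{B}=\{\mathcal{B}^{(0)},\mathcal{B}^{(1)},\mathcal{B}^{(2)}\}$ be a special $n$-Brinkhuis $k$-triple, and suppose some word of $\mathcal{B}^{(0)}$ begins with the letters $01$. Then: <ul> <li>$n\ge 7$;</li> <li>every word in $\mathcal{B}^{(0)}$ begins with $012$ and ends with $210$.</li> </ul>
   Context: Let $\Sigma=\{0,1,2\}$. A word over $\Sigma$ is square-free if it cannot be written as $xyyz$ with $y$ nonempty. $\mathcal{A}(n)$ is the set of square-free words of length $n$. For a word $w$, $\bar w$ denotes its reversal. $\tau$ is the letter permutation $0\mapsto1$, $1\mapsto2$, $2\mapsto0$, applied letterwise to words and elementwise to sets of words. An $n$-Brinkhuis $(k_0,k_1,k_2)$-triple consists of sets $\mathcal{B}^{(i)}\subset\mathcal{A}(n)$, $i\in\{0,1,2\}$, where $\mathcal{B}^{(i)}$ has $k_i\ge1$ distinct words. The defining condition: for every square-free word $ii'i''\in\mathcal{A}(3)$ and all $u\in\mathcal{B}^{(i)}$, $v\in\mathcal{B}^{(i')}$, $x\in\mathcal{B}^{(i'')}$, the concatenation $uvx$ is square-free. A special $n$-Brinkhuis $k$-triple is an $n$-Brinkhuis $(k,k,k)$-triple satisfying two further conditions: <ul> <li>$\mathcal{B}^{(1)}=\tau(\mathcal{B}^{(0)})$ and $\mathcal{B}^{(2)}=\tau^2(\mathcal{B}^{(0)})$;</li> <li>$w\in\mathcal{B}^{(0)}$ implies $\bar w\in\mathcal{B}^{(0)}$.</li> </ul> 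*)

theory Defs
  imports Main
begin

definition is_word :: "nat list \<Rightarrow> bool" where
  "is_word w \<longleftrightarrow> set w \<subseteq> {0,1,2}"

definition square_free :: "nat list \<Rightarrow> bool" where
  "square_free w \<longleftrightarrow> \<not> (\<exists>x y z. y \<noteq> [] \<and> w = x @ y @ y @ z)"

definition sqfree_words :: "nat \<Rightarrow> nat list set" where
  "sqfree_words n = {w. is_word w \<and> length w = n \<and> square_free w}"

definition tau_letter :: "nat \<Rightarrow> nat" where
  "tau_letter a = (a + 1) mod 3"

definition tau :: "nat list \<Rightarrow> nat list" where
  "tau w = map tau_letter w"

definition brinkhuis_triple ::
  "nat \<Rightarrow> (nat \<Rightarrow> nat list set) \<Rightarrow> bool" where
  "brinkhuis_triple n B \<longleftrightarrow>
     (\<forall>i\<in>{0,1,2::nat}. B i \<subseteq> sqfree_words n \<and> finite (B i) \<and> card (B i) \<ge> 1) \<and>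
     (\<forall>i i' i''. [i, i', i''] \<in> sqfree_words 3 \<longrightarrow>
        (\<forall>u\<in>B i. \<forall>v\<in>B i'. \<forall>x\<in>B i''. square_free (u @ v @ x)))"

definition special_brinkhuis_triple ::
  "nat \<Rightarrow> nat \<Rightarrow> (nat \<Rightarrow> nat list set) \<Rightarrow> bool" where
  "special_brinkhuis_triple n k B \<longleftrightarrow>
     brinkhuis_triple n B \<and>
     (\<forall>i\<in>{0,1,2::nat}. card (B i) = k) \<and>
     B 1 = tau ` B 0 \<and> B 2 = (tau \<circ> tau) ` B 0 \<and>
     (\<forall>w\<in>B 0. rev w \<in> B 0)"

end

theory Submission
  imports Defs
begin

definition sq_prefix :: "nat list \<Rightarrow> bool" where
  "sq_prefix w \<longleftrightarrow> (\<exists>l\<in>set [1..<length w div 2 + 1]. take l w = take l (drop l w))"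

lemma sf_Nil: "square_free []"
  unfolding square_free_def by auto

lemma sq_prefix_iff: "sq_prefix w \<longleftrightarrow> (\<exists>y z. y \<noteq> [] \<and> w = y @ y @ z)"
proof
  assume "sq_prefix w"
  then obtain l where l: "1 \<le> l" "l \<le> length w div 2" "take l w = take l (drop l w)"
    unfolding sq_prefix_def by auto
  have "w = take l w @ take l (drop l w) @ drop l (drop l w)"
    by (metis append_take_drop_id)
  then have "w = take l w @ take l w @ drop (2*l) w" using l(3) by (simp add: mult_2)
  moreover have "take l w \<noteq> []" using l by auto
  ultimately show "\<exists>y z. y \<noteq> [] \<and> w = y @ y @ z" by blast
next
  assume "\<exists>y z. y \<noteq> [] \<and> w = y @ y @ z"
  then obtain y z where "y \<noteq> []" "w = y @ y @ z" by blast
  moreover have "length y > 0" using \<open>y \<noteq> []\<close> by simp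
  moreover have "length w = 2 * length y + length z" using \<open>w = y @ y @ z\<close> by simp
  ultimately have "length y \<le> length w div 2" "1 \<le> length y" by presburger+
  then show "sq_prefix w" unfolding sq_prefix_def
  proof (intro bexI[of _ "length y"])
    show "take (length y) w = take (length y) (drop (length y) w)" using \<open>w = y @ y @ z\<close> by simp
    show "length y \<in> set [1..<length w div 2 + 1]" using \<open>length y \<le> length w div 2\<close> \<open>1 \<le> length y\<close>
      by (simp only: set_upt atLeastLessThan_iff) (simp; linarith)
  qed
qed

lemma sf_Cons: "square_free (a # w) \<longleftrightarrow> square_free w \<and> \<not> sq_prefix (a # w)"
proof
  assume A: "square_free (a # w)"
  show "square_free w \<and> \<not> sq_prefix (a # w)"
    using A unfolding square_free_def sq_prefix_iff by (metis append.left_neutral append_Cons)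
next
  assume "square_free w \<and> \<not> sq_prefix (a # w)"
  then show "square_free (a # w)" unfolding square_free_def sq_prefix_iff
    apply clarify
    subgoal for x y z by (cases x) auto
    done
qed

lemma sf_infix: "square_free (p @ m @ s) \<Longrightarrow> square_free m"
  unfolding square_free_def by (metis append.assoc)

lemma t1: "\<not> square_free [0,2,0,2::nat]" "square_free [0,1,2,1,0::nat]"
  "\<not> square_free ([0,1,2,1,0::nat] @ [2,0,1,0,2] @ [0,1,2,1,0])"
  by (simp_all add: sf_Cons sf_Nil sq_prefix_def)

lemma t2: "a \<in> {0,1,2::nat} \<Longrightarrow> b \<in> {0,1,2} \<Longrightarrow> square_free [0,2,a,b] \<Longrightarrow> square_free [2,1,a,b] \<Longrightarrow> square_free [a,b] \<Longrightarrow> a = 0 \<and> b = 1"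
  by (auto simp add: sf_Cons sf_Nil sq_prefix_def)

lemma sw3: "a \<noteq> b \<Longrightarrow> b \<noteq> c \<Longrightarrow> a \<in> {0,1,2::nat} \<Longrightarrow> b \<in> {0,1,2} \<Longrightarrow> c \<in> {0,1,2} \<Longrightarrow> [a,b,c] \<in> sqfree_words 3"
  unfolding sqfree_words_def is_word_def
  by (auto simp add: sf_Cons sf_Nil sq_prefix_def)

lemma t3: "\<not> square_free [2,0,2,0::nat]" "\<not> square_free [0,1,2,2,1,0::nat]" "\<not> square_free [1,1::nat]"
  by (simp_all add: sf_Cons sf_Nil sq_prefix_def)

lemma tau_simps: "tau [] = []" "tau (a # xs) = tau_letter a # tau xs" "tau (xs @ ys) = tau xs @ tau ys"
  "tau_letter 0 = 1" "tau_letter 1 = 2" "tau_letter 2 = 0" "tau_letter (Suc 0) = 2"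
  by (simp_all add: tau_def tau_letter_def)

theorem lemma3:
  fixes n k :: nat and B :: "nat \<Rightarrow> nat list set"
  assumes "n > 1" and "k \<ge> 1"
    and "special_brinkhuis_triple n k B"
    and "\<exists>w\<in>B 0. take 2 w = [0, 1]"
  shows "n \<ge> 7 \<and> (\<forall>w\<in>B 0. take 3 w = [0, 1, 2] \<and> drop (length w - 3) w = [2, 1, 0])"
proof -
  have BT: "brinkhuis_triple n B" and B1: "B 1 = tau ` B 0" and B2: "B 2 = (tau \<circ> tau) ` B 0"
    and rv0: "\<forall>w\<in>B 0. rev w \<in> B 0"
    using assms(3) unfolding special_brinkhuis_triple_def by simp_all
  have rv: "\<And>w. w \<in> B 0 \<Longrightarrow> rev w \<in> B 0" using rv0 by blast
  have Bsub: "B 0 \<subseteq> sqfree_words n" using BT unfolding brinkhuis_triple_def by simp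
  have trip: "\<And>i i' i'' u v x. [i,i',i''] \<in> sqfree_words 3 \<Longrightarrow> u \<in> B i \<Longrightarrow> v \<in> B i' \<Longrightarrow> x \<in> B i''
        \<Longrightarrow> square_free (u @ v @ x)"
  proof -
    fix i i' i'' u v x assume "[i,i',i''] \<in> sqfree_words 3" "u \<in> B i" "v \<in> B i'" "x \<in> B i''"
    moreover have "\<forall>i i' i''. [i, i', i''] \<in> sqfree_words 3 \<longrightarrow>
        (\<forall>u\<in>B i. \<forall>v\<in>B i'. \<forall>x\<in>B i''. square_free (u @ v @ x))"
      using BT unfolding brinkhuis_triple_def by (elim conjE)
    ultimately show "square_free (u @ v @ x)" by blast
  qed
  have mem0: "is_word u \<and> length u = n \<and> square_free u" if "u \<in> B 0" for u
    using Bsub that unfolding sqfree_words_def by blast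
  have in1: "tau u \<in> B 1" if "u \<in> B 0" for u using that B1 by blast
  have in2: "tau (tau u) \<in> B 2" if "u \<in> B 0" for u using that B2 by force
  have s201: "[2,0,1] \<in> sqfree_words 3" and s102: "[1,0,2] \<in> sqfree_words 3"
    and s020: "[0,2,0] \<in> sqfree_words 3" by (auto intro: sw3)
  obtain w where w: "w \<in> B 0" "take 2 w = [0,1]" using assms(4) by blast
  have lw: "length w = n" using mem0[OF w(1)] by blast
  have "w = take 2 w @ drop 2 w" by simp
  then obtain w' where ww: "w = 0 # 1 # w'" using w(2) by (metis append_Cons append_Nil)
  have r0: "rev w' @ [1,0] \<in> B 0" using rv[OF w(1)] ww by simp
  have R1: "tau (rev w') @ [2,1] \<in> B 1" using in1[OF r0] by (simp add: tau_simps)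
  have R2: "tau (tau (rev w')) @ [0,2] \<in> B 2" using in2[OF r0] by (simp add: tau_simps)
  have W1: "tau w \<in> B 1" using in1[OF w(1)] .
  have W2: "tau (tau w) \<in> B 2" using in2[OF w(1)] .
  have start01: "\<exists>v. u = 0 # 1 # v" if u: "u \<in> B 0" for u
  proof -
    have "length u \<ge> 2" using mem0[OF u] assms(1) by simp
    then obtain a b v where uv: "u = a # b # v"
      by (metis One_nat_def Suc_1 Suc_le_length_iff)
    have ab: "a \<in> {0,1,2}" "b \<in> {0,1,2}" using mem0[OF u] uv unfolding is_word_def by auto
    have "square_free (tau (tau (rev w')) @ [0,2,a,b] @ (v @ tau w))"
      using trip[OF s201 R2 u W1] uv by simp
    then have 1: "square_free [0,2,a,b]" by (rule sf_infix)
    have "square_free (tau (rev w') @ [2,1,a,b] @ (v @ tau (tau w)))"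
      using trip[OF s102 R1 u W2] uv by simp
    then have 2: "square_free [2,1,a,b]" by (rule sf_infix)
    have "square_free ([] @ [a,b] @ v)" using mem0[OF u] uv by simp
    then have 3: "square_free [a,b]" by (rule sf_infix)
    from t2[OF ab 1 2 3] uv show ?thesis by blast
  qed
  have end10: "\<exists>v. u = v @ [1,0]" if u: "u \<in> B 0" for u
  proof -
    obtain v where "rev u = 0 # 1 # v" using start01[OF rv[OF u]] by blast
    then have "u = rev v @ [1,0]" by (metis rev_rev_ident rev.simps append_Cons append_Nil rev_append)
    then show ?thesis by blast
  qed
  have n3: "n \<ge> 3"
  proof (rule ccontr)
    assume "\<not> n \<ge> 3"
    then have "n = 2" using assms(1) by simp
    then have "w = [0,1]" using ww lw by simp
    moreover obtain v where "w = v @ [1,0]" using end10[OF w(1)] by blast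
    ultimately have "[0,1::nat] = v @ [1,0]" by simp
    then have "rev [0,1::nat] = rev (v @ [1,0])" by simp
    then show False by simp
  qed
  have start012: "\<exists>v. u = 0 # 1 # 2 # v" if u: "u \<in> B 0" for u
  proof -
    obtain v where uv: "u = 0 # 1 # v" using start01[OF u] by blast
    have "length v \<ge> 1" using mem0[OF u] uv n3 by simp
    then obtain c v' where vv: "v = c # v'" by (cases v) auto
    have c: "c \<in> {0,1,2}" using mem0[OF u] uv vv unfolding is_word_def by auto
    have "c \<noteq> 1"
    proof
      assume "c = 1"
      then have "square_free ([0] @ [1,1] @ v')" using mem0[OF u] uv vv by simp
      then have "square_free [1,1::nat]" by (rule sf_infix)
      then show False using t3 by simp
    qed
    moreover have "c \<noteq> 0"
    proof
      assume "c = 0"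
      then have "rev v' @ [0,1,0] \<in> B 0" using rv[OF u] uv vv by simp
      then have "tau (tau (rev v')) @ [2,0,2] \<in> B 2" using in2 by (fastforce simp add: tau_simps)
      from trip[OF s201 this w(1) W1] have "square_free (tau (tau (rev v')) @ [2,0,2,0] @ (1 # w' @ tau w))"
        using ww by simp
      then have "square_free [2,0,2,0::nat]" by (rule sf_infix)
      then show False using t3 by simp
    qed
    ultimately show ?thesis using c uv vv by auto
  qed
  have ends: "take 3 u = [0, 1, 2] \<and> drop (length u - 3) u = [2, 1, 0]" if u: "u \<in> B 0" for u
  proof -
    obtain v where "u = 0 # 1 # 2 # v" using start012[OF u] by blast
    then have A: "take 3 u = [0, 1, 2]" by simp
    obtain v2 where "rev u = 0 # 1 # 2 # v2" using start012[OF rv[OF u]] by blast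
    then have "u = rev v2 @ [2,1,0]" by (metis rev_rev_ident rev.simps append_Cons append_Nil rev_append)
    then have "drop (length u - 3) u = [2, 1, 0]" by simp
    with A show ?thesis by blast
  qed
  have n7: "n \<ge> 7"
  proof (rule ccontr)
    assume "\<not> n \<ge> 7"
    obtain v where wv: "w = 0 # 1 # 2 # v" using start012[OF w(1)] by blast
    have dr: "drop (length w - 3) w = [2,1,0]" using ends[OF w(1)] by blast
    have "length v < 4" using lw wv \<open>\<not> n \<ge> 7\<close> by simp
    then have "length v = 0 \<or> length v = 1 \<or> length v = 2 \<or> length v = 3" by linarith
    then show False
    proof (elim disjE)
      assume "length v = 0" then show False using wv dr by simp
    next
      assume "length v = 1"
      then obtain d where "v = [d]" by (auto simp: length_Suc_conv)
      then show False using wv dr by simp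
    next
      assume "length v = 2"
      then obtain d e where "v = [d,e]" by (auto simp: length_Suc_conv numeral_eq_Suc)
      then have w5: "w = [0,1,2,1,0]" using wv dr by simp
      have "tau (tau w) = [2,0,1,0,2]" using w5 by (simp add: tau_simps)
      then have "square_free ([0,1,2,1,0::nat] @ [2,0,1,0,2] @ [0,1,2,1,0])"
        using trip[OF s020 w(1) W2 w(1)] w5 by simp
      then show False using t1 by simp
    next
      assume "length v = 3"
      then obtain d e f where "v = [d,e,f]" by (auto simp: length_Suc_conv numeral_eq_Suc)
      then have "w = [0,1,2,2,1,0]" using wv dr by simp
      then show False using mem0[OF w(1)] t3 by simp
    qed
  qed
  show ?thesis using n7 ends by blast
qed

end
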